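(* Let $x\in(0,\pi/2)$ and $p,q\in\mathbb{R}$. (i) If $q\ge 1$ and $p\le 3q-\frac85$, then \[ \left(\tfrac{2}{\pi}\right)^{p}+\left(1-\left(\tfrac{2}{\pi}\right)^{p}\right)\cos^{q}x<\left(\tfrac{\sin x}{x}\right)^{p}<1-\tfrac{p}{3q}+\tfrac{p}{3q}\cos^{q}x \quad\text{if } p>0, \] \[ \left(\tfrac{2}{\pi}\right)^{1-\cos^{q}x}<\tfrac{\sin x}{x}<\exp\tfrac{\cos^{q}x-1}{3q}\quad\text{if } p=0, \] \[ 1-\tfrac{p}{3q}+\tfrac{p}{3q}\cos^{q}x<\left(\tfrac{\sin x}{x}\right)^{p}<\left(\tfrac{2}{\pi}\right)^{p}+\left(1-\left(\tfrac{2}{\pi}\right)^{p}\right)\cos^{q}x\quad\text{if } p<0, \] and the constants $\frac13$ and $\kappa_{p,q}$ are best possible, where $\kappa_{p,q}=\frac{q}{p}\left(1-\left(\frac{2}{\pi}\right)^p\right)$ for $p\neq 0$ and $\kappa_{0,q}=q\ln\frac{\pi}{2}$. (Equivalently, these inequalities say $\frac13 U_q(\cos x)<U_p(\frac{\sin x}{x})<\kappa_{p,q}U_q(\cos x)$, and $\frac13$ cannot be replaced by a larger constant nor $\kappa_{p,q}$ by a smaller one.) (ii) If $\frac{34}{35}<q\le 1$ and $p\ge \frac{\pi^2}{4}-1$, then the double inequality stated in (i) for $p>0$ holds with both inequality signs reversed. (iii) If $0<q\le \frac{34}{35}$ and $p\ge 3q-\frac85$, then all three double inequalities stated in (i) (for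 $p>0$, $p=0$, $p<0$) hold with all inequality signs reversed. (iv) If $q\le 0$ and $p\ge 3q-\frac85$, then \[ \left(\tfrac{\sin x}{x}\right)^{p}>1-\tfrac{p}{3q}+\tfrac{p}{3q}\cos^{q}x \text{ if } p>0,\quad \tfrac{\sin x}{x}>\exp\tfrac{\cos^{q}x-1}{3q}\text{ if } p=0,\quad \left(\tfrac{\sin x}{x}\right)^{p}<1-\tfrac{p}{3q}+\tfrac{p}{3q}\cos^{q}x\text{ if } p<0, \] where $\frac13$ is the best constant.
   Context: For $t\in(0,1)$ and $p\in\mathbb{R}$ let $U_p(t)=\frac{1-t^p}{p}$ if $p\ne0$ and $U_0(t)=-\ln t$. When $q=0$, expressions of the form $\frac{1-u^q}{q}$ are interpreted as their limit $-\ln u$; thus $1-\frac{p}{3q}+\frac{p}{3q}\cos^q x$ means $1+\frac p3\ln\cos x$ and $\exp\frac{\cos^q x-1}{3q}$ means $(\cos x)^{1/3}$ when $q=0$. "Best constant" refers to the constant $c$ in bounds of the form $1-\frac{p}{q}c+\frac{p}{q}c\cos^q x$ (resp. $\exp(c\frac{\cos^q x-1}{q})$ for $p=0$), i.e. to $c$ in $U_p(\frac{\sin x}{x})\lessgtr c\,U_q(\cos x)$. *)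

theory Defs
  imports Complex_Main
begin

definition U :: "real \<Rightarrow> real \<Rightarrow> real" where
  "U p t = (if p = 0 then - ln t else (1 - t powr p) / p)"

definition kappa :: "real \<Rightarrow> real \<Rightarrow> real" where
  "kappa p q = (if p = 0 then q * ln (pi / 2) else q / p * (1 - (2 / pi) powr p))"

end

theory Submission
  imports Defs "HOL-Analysis.Analysis" "HOL-Real_Asymp.Real_Asymp"
begin

fun pe :: "int list \<Rightarrow> real \<Rightarrow> real" where
  "pe [] y = 0"
| "pe (c # cs) y = of_int c + y * pe cs y"

fun padd :: "int list \<Rightarrow> int list \<Rightarrow> int list" where
  "padd [] q = q"
| "padd p [] = p"
| "padd (a # p) (b # q) = (a + b) # padd p q"

definition psm :: "int \<Rightarrow> int list \<Rightarrow> int list" where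
  "psm c p = map ((*) c) p"

fun pmul :: "int list \<Rightarrow> int list \<Rightarrow> int list" where
  "pmul [] q = []"
| "pmul (a # p) q = padd (psm a q) (0 # pmul p q)"

lemma pe_padd[simp]: "pe (padd p q) y = pe p y + pe q y"
  by (induction p q rule: padd.induct) (auto simp: algebra_simps)

lemma pe_psm[simp]: "pe (psm c p) y = of_int c * pe p y"
  by (induction p) (auto simp: psm_def algebra_simps)

lemma pe_pmul[simp]: "pe (pmul p q) y = pe p y * pe q y"
  by (induction p) (auto simp: algebra_simps)

lemma pe_append: "pe (p @ q) y = pe p y + y ^ length p * pe q y"
  by (induction p) (auto simp: algebra_simps)

lemma pe_abs: "0 \<le> y \<Longrightarrow> \<bar>pe p y\<bar> \<le> pe (map abs p) y"
proof (induction p)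
  case Nil then show ?case by simp
next
  case (Cons c p)
  have "\<bar>pe (c # p) y\<bar> \<le> \<bar>of_int c\<bar> + y * \<bar>pe p y\<bar>"
    using Cons.prems by (simp add: abs_mult abs_triangle_ineq order_trans[OF abs_triangle_ineq])
  also have "\<dots> \<le> \<bar>of_int c\<bar> + y * pe (map abs p) y"
    using Cons by (simp add: mult_left_mono)
  finally show ?case by simp
qed

lemma pe_map_upt: "pe (map f [0..<N]) y = (\<Sum>i<N. of_int (f i) * y ^ i)"
  by (induction N) (auto simp: pe_append algebra_simps)

lemma pe_replicate0[simp]: "pe (replicate m 0) y = 0"
  by (induction m) auto

lemma pe_rep0: "pe (replicate m 0 @ q) y = y ^ m * pe q y"
  by (simp add: pe_append)

fun pf :: "nat \<Rightarrow> nat \<Rightarrow> int" where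
  "pf N m = (if N \<le> m then 1 else int N * pf (N - 1) m)"

declare pf.simps[simp del]

lemma pf_fact: "m \<le> N \<Longrightarrow> (of_int (pf N m) :: real) * fact m = fact N"
proof (induction N)
  case 0 then show ?case by (simp add: pf.simps)
next
  case (Suc N)
  show ?case
  proof (cases "Suc N \<le> m")
    case True
    then have "m = Suc N" using Suc.prems by simp
    then show ?thesis by (simp add: pf.simps)
  next
    case False
    then have "m \<le> N" by simp
    then show ?thesis using Suc.IH False by (simp add: pf.simps algebra_simps)
  qed
qed

definition cosT :: "nat \<Rightarrow> int \<Rightarrow> int list" where
  "cosT N k = map (\<lambda>i. if even i then (-1) ^ (i div 2) * pf N i * k ^ i else 0) [0..<N]"

definition sinT :: "nat \<Rightarrow> int \<Rightarrow> int list" where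
  "sinT N k = map (\<lambda>i. if odd i then (-1) ^ (i div 2) * pf N i * k ^ i else 0) [0..<N]"

lemma pe_cosT: "pe (cosT N k) y = fact N * (\<Sum>i<N. cos_coeff i * (of_int k * y) ^ i)"
  unfolding cosT_def pe_map_upt sum_distrib_left
proof (rule sum.cong[OF refl])
  fix i assume "i \<in> {..<N}"
  then have "(of_int (pf N i) :: real) = fact N / fact i" using pf_fact[of i N]
    by (simp add: field_simps)
  then show "of_int (if even i then (-1) ^ (i div 2) * pf N i * k ^ i else 0) * y ^ i =
    fact N * (cos_coeff i * (of_int k * y) ^ i)"
    by (simp add: cos_coeff_def power_mult_distrib)
qed

lemma pe_sinT: "pe (sinT N k) y = fact N * (\<Sum>i<N. sin_coeff i * (of_int k * y) ^ i)"
  unfolding sinT_def pe_map_upt sum_distrib_left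
proof (rule sum.cong[OF refl])
  fix i assume "i \<in> {..<N}"
  then have "(of_int (pf N i) :: real) = fact N / fact i" using pf_fact[of i N]
    by (simp add: field_simps)
  then show "of_int (if odd i then (-1) ^ (i div 2) * pf N i * k ^ i else 0) * y ^ i =
    fact N * (sin_coeff i * (of_int k * y) ^ i)"
    by (auto simp: sin_coeff_def power_mult_distrib elim!: oddE)
qed

lemma cos_bound_N: "\<bar>cos x - (\<Sum>m<N. cos_coeff m * x ^ m)\<bar> \<le> \<bar>x\<bar> ^ N / fact N"
proof -
  obtain t where "cos x = (\<Sum>m<N. cos_coeff m * x ^ m) + (cos (t + 1/2 * real N * pi) / fact N) * x ^ N"
    using Maclaurin_cos_expansion by blast
  then have "\<bar>cos x - (\<Sum>m<N. cos_coeff m * x ^ m)\<bar> = \<bar>cos (t + 1/2 * real N * pi)\<bar> / fact N * \<bar>x\<bar> ^ N"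
    by (simp add: abs_mult power_abs)
  also have "\<dots> \<le> 1 / fact N * \<bar>x\<bar> ^ N"
    by (intro mult_right_mono divide_right_mono) auto
  finally show ?thesis by simp
qed

lemma sin_bound_N: "\<bar>sin x - (\<Sum>m<N. sin_coeff m * x ^ m)\<bar> \<le> \<bar>x\<bar> ^ N / fact N"
  using Maclaurin_sin_bound[of x N] by (simp add: divide_inverse mult.commute)

definition mono_err :: "nat \<Rightarrow> int \<Rightarrow> int list" where
  "mono_err N k = replicate N 0 @ [k ^ N]"

lemma pe_mono_err: "pe (mono_err N k) y = (of_int k) ^ N * y ^ N"
  by (simp add: mono_err_def pe_append)

lemma trig_lb:
  assumes y: "0 \<le> y" and k: "0 \<le> k"
    and T: "\<bar>fact N * f (of_int k * y) - pe Tl y\<bar> \<le> (of_int k) ^ N * y ^ N"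
  shows "pe (pmul b Tl) y - pe (pmul (map abs b) (mono_err N k)) y \<le> fact N * (pe b y * f (of_int k * y))"
proof -
  have "pe b y * (fact N * f (of_int k * y) - pe Tl y) \<ge> - (\<bar>pe b y\<bar> * (of_int k ^ N * y ^ N))"
  proof -
    have "\<bar>pe b y * (fact N * f (of_int k * y) - pe Tl y)\<bar> \<le> \<bar>pe b y\<bar> * (of_int k ^ N * y ^ N)"
      unfolding abs_mult by (intro mult_left_mono T) auto
    then show ?thesis by linarith
  qed
  moreover have "\<bar>pe b y\<bar> * (of_int k ^ N * y ^ N) \<le> pe (map abs b) y * (of_int k ^ N * y ^ N)"
    using pe_abs[OF y] y k by (intro mult_right_mono) auto
  ultimately show ?thesis by (simp add: pe_mono_err algebra_simps)
qed

lemma cos_T: assumes "0 \<le> y" "0 \<le> k"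
  shows "\<bar>fact N * cos (of_int k * y) - pe (cosT N k) y\<bar> \<le> (of_int k) ^ N * y ^ N"
proof -
  have "\<bar>fact N * cos (of_int k * y) - pe (cosT N k) y\<bar> = fact N * \<bar>cos (of_int k * y) - (\<Sum>i<N. cos_coeff i * (of_int k * y) ^ i)\<bar>"
    by (simp add: pe_cosT abs_mult flip: right_diff_distrib)
  also have "\<dots> \<le> fact N * (\<bar>of_int k * y\<bar> ^ N / fact N)"
    by (intro mult_left_mono cos_bound_N) auto
  also have "\<dots> = (of_int k) ^ N * y ^ N" using assms by (simp add: power_mult_distrib)
  finally show ?thesis .
qed

lemma sin_T: assumes "0 \<le> y" "0 \<le> k"
  shows "\<bar>fact N * sin (of_int k * y) - pe (sinT N k) y\<bar> \<le> (of_int k) ^ N * y ^ N"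
proof -
  have "\<bar>fact N * sin (of_int k * y) - pe (sinT N k) y\<bar> = fact N * \<bar>sin (of_int k * y) - (\<Sum>i<N. sin_coeff i * (of_int k * y) ^ i)\<bar>"
    by (simp add: pe_sinT abs_mult flip: right_diff_distrib)
  also have "\<dots> \<le> fact N * (\<bar>of_int k * y\<bar> ^ N / fact N)"
    by (intro mult_left_mono sin_bound_N) auto
  also have "\<dots> = (of_int k) ^ N * y ^ N" using assms by (simp add: power_mult_distrib)
  finally show ?thesis .
qed

fun texpr :: "int list \<Rightarrow> (int list \<times> bool \<times> int) list \<Rightarrow> real \<Rightarrow> real" where
  "texpr a [] y = pe a y"
| "texpr a ((b, c, k) # ts) y = pe b y * (if c then cos (of_int k * y) else sin (of_int k * y)) + texpr a ts y"

fun tlb :: "nat \<Rightarrow> int list \<Rightarrow> (int list \<times> bool \<times> int) list \<Rightarrow> int list" where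
  "tlb N a [] = psm (pf N 0) a"
| "tlb N a ((b, c, k) # ts) = padd (padd (pmul b (if c then cosT N k else sinT N k))
      (psm (-1) (pmul (map abs b) (mono_err N k)))) (tlb N a ts)"

lemma tlb_sound:
  assumes "0 \<le> y" "\<forall>(b,c,k)\<in>set ts. 0 \<le> k"
  shows "pe (tlb N a ts) y \<le> fact N * texpr a ts y"
  using assms(2)
proof (induction ts)
  case Nil
  have "(of_int (pf N 0) :: real) = fact N" using pf_fact[of 0 N] by simp
  then show ?case by simp
next
  case (Cons t ts)
  obtain b c k where t: "t = (b, c, k)" by (cases t) auto
  have k: "0 \<le> k" using Cons.prems t by auto
  have IH: "pe (tlb N a ts) y \<le> fact N * texpr a ts y" using Cons by auto
  have "pe (pmul b (if c then cosT N k else sinT N k)) y - pe (pmul (map abs b) (mono_err N k)) y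
      \<le> fact N * (pe b y * (if c then cos (of_int k * y) else sin (of_int k * y)))"
  proof (cases c)
    case True
    then show ?thesis using trig_lb[of y k N cos "cosT N k" b] cos_T[OF assms(1) k] assms(1) k by simp
  next
    case False
    then show ?thesis using trig_lb[of y k N sin "sinT N k" b] sin_T[OF assms(1) k] assms(1) k by simp
  qed
  then show ?case using IH t by (simp add: algebra_simps)
qed

fun lo :: "int \<Rightarrow> int \<Rightarrow> int \<Rightarrow> int list \<Rightarrow> int" where
  "lo D a b [] = 0"
| "lo D a b (c # cs) = (let l = lo D a b cs in D ^ Suc (length cs) * c + (if 0 \<le> l then a else b) * l)"

lemma lo_sound:
  assumes D: "0 < D" and a: "0 \<le> a" and y: "of_int a / of_int D \<le> y" "y \<le> of_int b / of_int D"
  shows "of_int (lo D a b cs) \<le> (of_int D) ^ length cs * pe cs y"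
proof (induction cs)
  case Nil then show ?case by simp
next
  case (Cons c cs)
  define l where "l = lo D a b cs"
  have Dy1: "of_int a \<le> of_int D * y" using y D by (simp add: field_simps)
  have Dy2: "of_int D * y \<le> of_int b" using y D by (simp add: field_simps)
  have y0: "0 \<le> y" using a D y(1) by (smt (verit) divide_nonneg_pos of_int_0_le_iff of_int_0_less_iff)
  have IH: "of_int l \<le> of_int D ^ length cs * pe cs y" using Cons l_def by simp
  have "(if 0 \<le> l then of_int a else of_int b) * of_int l \<le> (of_int D * y) * (of_int D ^ length cs * pe cs y)"
  proof (cases "0 \<le> l")
    case True
    have "of_int a * of_int l \<le> (of_int D * y) * of_int l" using Dy1 True by (intro mult_right_mono) auto
    also have "\<dots> \<le> (of_int D * y) * (of_int D ^ length cs * pe cs y)" using IH D y0 by (intro mult_left_mono) auto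
    finally show ?thesis using True by simp
  next
    case False
    have "of_int b * of_int l \<le> (of_int D * y) * of_int l" using Dy2 False by (intro mult_right_mono_neg) auto
    also have "\<dots> \<le> (of_int D * y) * (of_int D ^ length cs * pe cs y)" using IH D y0 by (intro mult_left_mono) auto
    finally show ?thesis using False by simp
  qed
  then show ?case by (cases "0 \<le> l") (simp_all add: l_def[symmetric] Let_def algebra_simps)
qed

fun chk :: "int \<Rightarrow> int \<Rightarrow> nat \<Rightarrow> int list \<Rightarrow> bool" where
  "chk D a 0 Q = True"
| "chk D a (Suc K) Q = (0 < lo D a (a + 1) Q \<and> chk D (a + 1) K Q)"

lemma chk_sound:
  assumes "chk D a K Q" "0 < K" "0 < D" "0 \<le> a" "of_int a / of_int D \<le> y" "y \<le> of_int (a + int K) / of_int D"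
  shows "0 < pe Q y"
  using assms
proof (induction K arbitrary: a)
  case 0
  then show ?case by simp
next
  case (Suc K)
  show ?case
  proof (cases "y \<le> of_int (a + 1) / of_int D")
    case True
    have "of_int (lo D a (a + 1) Q) \<le> (of_int D) ^ length Q * pe Q y"
      using lo_sound[of D a y "a+1" Q] Suc.prems True by simp
    moreover have "0 < lo D a (a + 1) Q" using Suc.prems by simp
    ultimately have "0 < (of_int D :: real) ^ length Q * pe Q y" by linarith
    then show ?thesis using Suc.prems(3) by (simp add: zero_less_mult_iff)
  next
    case False
    then have "0 < K" using Suc.prems(6) by (cases K) auto
    then show ?thesis using Suc.IH[of "a+1"] Suc.prems False by (simp add: add_ac)
  qed
qed

lemma cert_pos:
  assumes eq: "tlb N a ts = replicate m 0 @ Q" and ck: "chk D l K Q" and K: "0 < K" and D: "0 < D" and l: "0 \<le> l"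
    and y1: "of_int l / of_int D \<le> y" and y2: "y \<le> of_int (l + int K) / of_int D" and y: "0 < y"
    and ks: "\<forall>(b,c,k)\<in>set ts. 0 \<le> k"
  shows "0 < texpr a ts y"
proof -
  have "0 < pe Q y" by (rule chk_sound[OF ck K D l y1 y2])
  then have "0 < pe (tlb N a ts) y" using y by (simp add: eq pe_rep0)
  also have "\<dots> \<le> fact N * texpr a ts y" using tlb_sound[of y ts N a] y ks by simp
  finally show ?thesis by (simp add: zero_less_mult_iff)
qed

lemma cert_A_eq: "tlb 10 [0, 2] [([0, 1], True, 1), ([-3], False, 1)] = replicate 5 0 @ [60480, 0, -2880, 0, 60, -3, -1]"
  by code_simp

lemma cert_A_chk: "chk 1 0 4 [60480, 0, -2880, 0, 60, -3, -1]"
  by code_simp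

lemma cert_B_eq: "tlb 12 [-24, 0, 4] [([24, 0, -1], True, 1), ([0, 9], False, 1)] = replicate 8 0 @ [95040, 0, -3168, 0, 0, -9, -1]"
  by code_simp

lemma cert_B_chk: "chk 1 0 4 [95040, 0, -3168, 0, 0, -9, -1]"
  by code_simp

lemma cert_C_eq: "tlb 16 [] [([0, -54], False, 1), ([0, -58], False, 3), ([81, 0, -108], True, 1), ([-81, 0, 12], True, 3)] = replicate 10 0 @ [2550587719680, 0, -579679027200, 0, 60834447360, 0, -3945922722, -2496709872, -516560760]"
  by code_simp

lemma cert_C_chk: "chk 1 0 2 [2550587719680, 0, -579679027200, 0, 60834447360, 0, -3945922722, -2496709872, -516560760]"
  by code_simp

lemma cert_D1_eq: "tlb 14 [49348, 0, -7663] [([-49348, 0, 2337], True, 1), ([0, -19348], False, 1)] = replicate 6 0 @ [408042835200, 0, -54996701760, 0, 1590340752, 0, -22869392, 0, 105114, -19348, -2337]"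
  by code_simp

lemma cert_D1_chk: "chk 16 0 45 [408042835200, 0, -54996701760, 0, 1590340752, 0, -22869392, 0, 105114, -19348, -2337]"
  by code_simp

lemma cert_D2a_eq: "tlb 12 [0, 15326] [([0, 14674], True, 1), ([-30000, 0, 2337], False, 1)] = replicate 5 0 @ [-13451961600, 0, 2417437440, 0, -87381360, 0, 1507872, -30000, -42718, -2337]"
  by code_simp

lemma cert_D2a_chk: "chk 16 45 6 [-13451961600, 0, 2417437440, 0, -87381360, 0, 1507872, -30000, -42718, -2337]"
  by code_simp

lemma cert_D2b_eq: "tlb 12 [0, 1226] [([0, 1174], True, 1), ([-2400, 0, 187], False, 1)] = replicate 5 0 @ [-1077753600, 0, 193501440, 0, -6993360, 0, 120672, -2400, -3418, -187]"
  by code_simp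

lemma cert_D2b_chk: "chk 16 45 6 [-1077753600, 0, 193501440, 0, -6993360, 0, 120672, -2400, -3418, -187]"
  by code_simp

lemma trigA: "0 < (y::real) \<Longrightarrow> y \<le> 4 \<Longrightarrow> 0 < 2*y + y*cos y - 3* sin y"
  using cert_pos[OF cert_A_eq cert_A_chk, of y] by (simp add: algebra_simps)

lemma trigB: "0 < (y::real) \<Longrightarrow> y \<le> 4 \<Longrightarrow> 0 < 4*y^2 - 24 + (24 - y^2) * cos y + 9*y* sin y"
  using cert_pos[OF cert_B_eq cert_B_chk, of y] by (simp add: algebra_simps power2_eq_square)

lemma trigC: "0 < (x::real) \<Longrightarrow> x \<le> 2 \<Longrightarrow> 0 < - 54 * x * sin x - 58 * x * sin (3*x) + (81 - 108 * x^2) * cos x + (12 * x^2 - 81) * cos (3*x)"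
  using cert_pos[OF cert_C_eq cert_C_chk, of x] by (simp add: algebra_simps power2_eq_square)

lemma trigD1: "0 < (y::real) \<Longrightarrow> y \<le> 45/16 \<Longrightarrow> 0 < 49348 - 7663*y^2 + (2337*y^2 - 49348) * cos y - 19348 * y * sin y"
  using cert_pos[OF cert_D1_eq cert_D1_chk, of y] by (simp add: algebra_simps power2_eq_square)

lemma trigD2a: "45/16 \<le> (y::real) \<Longrightarrow> y \<le> 51/16 \<Longrightarrow> 0 < (8*5000 - 2*12337)*y + (2*12337 - 2*5000)*y*cos y + (12337 - 2*5000)*y^2* sin y - 6*5000* sin y"
  using cert_pos[OF cert_D2a_eq cert_D2a_chk, of y] by (simp add: algebra_simps power2_eq_square)

lemma trigD2b: "45/16 \<le> (y::real) \<Longrightarrow> y \<le> 51/16 \<Longrightarrow> 0 < (8*400 - 2*987)*y + (2*987 - 2*400)*y*cos y + (987 - 2*400)*y^2* sin y - 6*400* sin y"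
  using cert_pos[OF cert_D2b_eq cert_D2b_chk, of y] by (simp add: algebra_simps power2_eq_square)

lemma cert_E_eq: "tlb 6 [] [([1], False, 1), ([0, -1], True, 1)] = replicate 3 0 @ [240, 0, -24, -1, -1]"
  by code_simp

lemma cert_E_chk: "chk 1 0 2 [240, 0, -24, -1, -1]"
  by code_simp

lemma trigE: "0 < (x::real) \<Longrightarrow> x \<le> 2 \<Longrightarrow> x * cos x < sin x"
  using cert_pos[OF cert_E_eq cert_E_chk, of x] by (simp add: algebra_simps)

lemma pi_bounds: "3.141592653588 \<le> pi" "pi \<le> 3.1415926535899"
  by (rule pi_approx)+

definition Fh :: "real \<Rightarrow> real \<Rightarrow> real \<Rightarrow> real" where
  "Fh p q x = (p - 1) * (cos x / sin x - 1 / x) + x * sin x / (sin x - x * cos x) - 2 / x - cos x / sin x + (q - 1) * (sin x / cos x)"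

lemma basic_sc:
  assumes "0 < x" "x < pi/2"
  shows "0 < sin x" "0 < cos x" "x * cos x < sin x" "x < 2"
proof -
  show "0 < sin x" using assms by (intro sin_gt_zero) auto
  show "0 < cos x" using assms by (intro cos_gt_zero) auto
  show "x < 2" using assms pi_bounds by simp
  then show "x * cos x < sin x" using assms trigE by simp
qed

lemma kpos: "0 < x \<Longrightarrow> x < pi/2 \<Longrightarrow> 0 < 1 / x - cos x / sin x"
  using basic_sc[of x] by (simp add: field_simps)

lemma sin_treble: "sin (3 * (x::real)) = 3 * sin x - 4 * sin x ^ 3"
proof -
  have "sin (3 * x) = sin (2 * x + x)" by simp
  also have "\<dots> = 3 * sin x - 4 * sin x ^ 3"
    unfolding sin_add sin_double cos_double using sin_cos_squared_add[of x] by algebra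
  finally show ?thesis .
qed

lemma hpos:
  assumes "0 < x" "x < pi/2"
  shows "0 < sin x / cos x - 3 * (1 / x - cos x / sin x)"
proof -
  note b = basic_sc[OF assms]
  have "0 < 2*(2*x) + (2*x)*cos (2*x) - 3* sin (2*x)" using trigA[of "2*x"] assms pi_bounds by simp
  also have "2*(2*x) + (2*x)*cos (2*x) - 3* sin (2*x) = 2 * (x * sin x ^ 2 - 3 * sin x * cos x + 3 * x * cos x ^ 2)"
    unfolding sin_double cos_double using sin_cos_squared_add[of x] by algebra
  finally have "0 < x * sin x ^ 2 - 3 * sin x * cos x + 3 * x * cos x ^ 2" by simp
  moreover have "sin x / cos x - 3 * (1 / x - cos x / sin x) = (x * sin x ^ 2 - 3 * sin x * cos x + 3 * x * cos x ^ 2) / (x * sin x * cos x)"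
    using b assms by (simp add: field_simps power2_eq_square)
  ultimately show ?thesis using b assms by simp
qed

lemma FB:
  assumes "0 < x" "x < pi/2"
  shows "0 < Fh (7/5) 1 x"
proof -
  note b = basic_sc[OF assms]
  have "0 < 4*(2*x)^2 - 24 + (24 - (2*x)^2) * cos (2*x) + 9*(2*x)* sin (2*x)" using trigB[of "2*x"] assms pi_bounds by simp
  also have "4*(2*x)^2 - 24 + (24 - (2*x)^2) * cos (2*x) + 9*(2*x)* sin (2*x) = 4 * (5*x^2* sin x^2 + 3*x^2*cos x^2 - 12* sin x^2 + 9*x* sin x*cos x)"
    unfolding sin_double cos_double using sin_cos_squared_add[of x] by algebra
  finally have pos: "0 < 5*x^2* sin x^2 + 3*x^2*cos x^2 - 12* sin x^2 + 9*x* sin x*cos x" by simp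
  have d: "0 < sin x - x * cos x" using b by simp
  have "Fh (7/5) 1 x = (5*x^2* sin x^2 + 3*x^2*cos x^2 - 12* sin x^2 + 9*x* sin x*cos x) / (5 * x * sin x * (sin x - x * cos x))"
    using b assms d unfolding Fh_def by (simp add: field_simps power2_eq_square)
  then show ?thesis using pos b assms d by simp
qed

lemma FC:
  assumes "0 < x" "x < pi/2"
  shows "Fh (46/35) (34/35) x < 0"
proof -
  note b = basic_sc[OF assms]
  have "0 < - 54 * x * sin x - 58 * x * sin (3*x) + (81 - 108 * x^2) * cos x + (12 * x^2 - 81) * cos (3*x)"
    using trigC[of x] b assms by simp
  also have "- 54 * x * sin x - 58 * x * sin (3*x) + (81 - 108 * x^2) * cos x + (12 * x^2 - 81) * cos (3*x)
     = 4 * ((sin x - x * cos x) * (x * sin x ^ 2 + 81 * sin x * cos x + 24 * x * cos x ^ 2) - 35 * x^2 * sin x^2 * cos x)"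
    unfolding sin_treble cos_treble_cos using sin_cos_squared_add[of x] by algebra
  finally have pos: "0 < (sin x - x * cos x) * (x * sin x ^ 2 + 81 * sin x * cos x + 24 * x * cos x ^ 2) - 35 * x^2 * sin x^2 * cos x" by (simp add: mult_ac)
  have d: "0 < sin x - x * cos x" using b by simp
  have "Fh (46/35) (34/35) x = - ((sin x - x * cos x) * (x * sin x ^ 2 + 81 * sin x * cos x + 24 * x * cos x ^ 2) - 35 * x^2 * sin x^2 * cos x) / (35 * x * sin x * cos x * (sin x - x * cos x))"
    using b assms d unfolding Fh_def by (simp add: field_simps power2_eq_square)
  moreover have "0 < 35 * x * sin x * cos x * (sin x - x * cos x)" using b assms d by simp
  ultimately show ?thesis using pos by (simp add: divide_neg_pos)
qed

definition E1 :: "real \<Rightarrow> real" where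
  "E1 y = 4 - 4 * cos y - 4 * y * sin y + y^2 + y^2 * cos y"
definition E2 :: "real \<Rightarrow> real" where
  "E2 y = 6 * y * sin y - 4 * y^2 - 2 * y^2 * cos y"
definition E1' :: "real \<Rightarrow> real" where
  "E1' y = 2 * y - 2 * y * cos y - y^2 * sin y"
definition E2' :: "real \<Rightarrow> real" where
  "E2' y = 6 * sin y + 2 * y * cos y - 8 * y + 2 * y^2 * sin y"

lemma E1_der: "((\<lambda>y. a * E1 y + E2 y) has_real_derivative (a * E1' y + E2' y)) (at y)"
  unfolding E1_def E2_def E1'_def E2'_def
  by (rule derivative_eq_intros refl | simp add: algebra_simps power2_eq_square)+

lemma E1_2x: "E1 (2 * x) = 8 * (sin x - x * cos x)^2"
  unfolding E1_def sin_double cos_double using sin_cos_squared_add[of x] by algebra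

lemma a_bounds: "12337/5000 \<le> pi^2/4" "pi^2/4 \<le> 987/400" "45/16 < pi" "pi \<le> 51/16"
proof -
  have p: "3.141592653588 \<le> pi" "pi \<le> 3.1415926535899" by (rule pi_approx)+
  have "(9.8696::real) \<le> 3.141592653588^2" by (simp add: power2_eq_square)
  also have "\<dots> \<le> pi^2" using p by (intro power_mono) auto
  finally show "12337/5000 \<le> pi^2/4" by simp
  have "pi^2 \<le> 3.1415926535899^2" using p by (intro power_mono) auto
  also have "\<dots> \<le> (9.87::real)" by (simp add: power2_eq_square)
  finally show "pi^2/4 \<le> 987/400" by simp
  show "45/16 < pi" "pi \<le> 51/16" using p by simp_all
qed

lemma Gy_D2:
  assumes "45/16 \<le> y" "y < pi"
  shows "0 < pi^2/4 * E1 y + E2 y"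
proof -
  let ?a = "pi^2/4"
  have der: "\<exists>d. ((\<lambda>y. ?a * E1 y + E2 y) has_real_derivative d) (at z) \<and> d < 0"
    if "y \<le> z" "z \<le> pi" for z
  proof -
    have z: "45/16 \<le> z" "z \<le> 51/16" using that assms a_bounds by auto
    have h1: "0 < - (12337 * E1' z + 5000 * E2' z)"
      using trigD2a[OF z] unfolding E1'_def E2'_def by (simp add: algebra_simps power2_eq_square)
    have h2: "0 < - (987 * E1' z + 400 * E2' z)"
      using trigD2b[OF z] unfolding E1'_def E2'_def by (simp add: algebra_simps power2_eq_square)
    have "?a * E1' z + E2' z < 0"
    proof (cases "0 \<le> E1' z")
      case True
      then have "?a * E1' z \<le> 987/400 * E1' z" using a_bounds by (intro mult_right_mono) auto
      then show ?thesis using h2 by linarith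
    next
      case False
      then have "?a * E1' z \<le> 12337/5000 * E1' z" using a_bounds by (intro mult_right_mono_neg) auto
      then show ?thesis using h1 by linarith
    qed
    then show ?thesis using E1_der by blast
  qed
  have "?a * E1 pi + E2 pi < ?a * E1 y + E2 y"
    by (rule DERIV_neg_imp_decreasing[OF assms(2)]) (use der in auto)
  moreover have "?a * E1 pi + E2 pi = 0" unfolding E1_def E2_def by (simp add: power2_eq_square)
  ultimately show ?thesis by simp
qed

lemma Gy_pos:
  assumes "0 < y" "y < pi"
  shows "0 < pi^2/4 * E1 y + E2 y"
proof (cases "y \<le> 45/16")
  case True
  have "0 < 49348 - 7663 * y^2 + (2337 * y^2 - 49348) * cos y - 19348 * y * sin y"
    using trigD1 assms True by simp
  then have h: "0 < 12337 * E1 y + 5000 * E2 y" unfolding E1_def E2_def by (simp add: algebra_simps)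
  have "0 \<le> E1 y" using E1_2x[of "y/2"] by simp
  then have "12337/5000 * E1 y \<le> pi^2/4 * E1 y" using a_bounds by (intro mult_right_mono) auto
  then show ?thesis using h by linarith
next
  case False
  then show ?thesis using Gy_D2 assms by simp
qed

lemma FD:
  assumes "0 < x" "x < pi/2"
  shows "Fh (pi^2/4 - 1) 1 x < 0"
proof -
  note b = basic_sc[OF assms]
  let ?a = "pi^2/4"
  have "0 < ?a * E1 (2*x) + E2 (2*x)" using Gy_pos[of "2*x"] assms by simp
  also have "?a * E1 (2*x) + E2 (2*x) = 8 * (?a * (sin x - x * cos x)^2 + 3 * x * cos x * (sin x - x * cos x) - x^2 * sin x^2)"
    unfolding E1_2x unfolding E2_def sin_double cos_double using sin_cos_squared_add[of x] by algebra
  finally have pos: "0 < ?a * (sin x - x * cos x)^2 + 3 * x * cos x * (sin x - x * cos x) - x^2 * sin x^2" by simp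
  have d: "0 < sin x - x * cos x" using b by simp
  have "Fh (?a - 1) 1 x = - (?a * (sin x - x * cos x)^2 + 3 * x * cos x * (sin x - x * cos x) - x^2 * sin x^2) / (x * sin x * (sin x - x * cos x))"
    using b assms d unfolding Fh_def by (simp add: field_simps power2_eq_square)
  moreover have "0 < x * sin x * (sin x - x * cos x)" using b assms d by simp
  ultimately show ?thesis using pos by (simp add: divide_neg_pos)
qed

lemma abs_inc:
  fixes f g E g' :: "real \<Rightarrow> real" and b L :: real
  assumes b: "0 < b"
    and f0: "f 0 = 0" and g0: "g 0 = 0"
    and cf0: "isCont f 0" and cg0: "isCont g 0"
    and df: "\<And>z. 0 < z \<Longrightarrow> z < b \<Longrightarrow> (f has_real_derivative E z * g' z) (at z)"
    and dg: "\<And>z. 0 < z \<Longrightarrow> z < b \<Longrightarrow> (g has_real_derivative g' z) (at z)"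
    and gp: "\<And>z. 0 < z \<Longrightarrow> z < b \<Longrightarrow> 0 < g' z"
    and Emono: "\<And>z w. 0 < z \<Longrightarrow> z < w \<Longrightarrow> w < b \<Longrightarrow> E z < E w"
    and Elim: "(E \<longlongrightarrow> L) (at_right 0)"
  shows abs_inc_gpos: "\<And>x. 0 < x \<Longrightarrow> x < b \<Longrightarrow> 0 < g x"
    and abs_inc_low: "\<And>x. 0 < x \<Longrightarrow> x < b \<Longrightarrow> L < f x / g x"
    and abs_inc_mono: "\<And>x y. 0 < x \<Longrightarrow> x < y \<Longrightarrow> y < b \<Longrightarrow> f x / g x < f y / g y"
    and abs_inc_best: "\<And>c. L < c \<Longrightarrow> \<exists>x. 0 < x \<and> x < b \<and> f x / g x < c"
proof -
  have cf: "isCont f z" if "0 \<le> z" "z < b" for z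
    using that cf0 df[of z] by (cases "z = 0") (auto intro: DERIV_isCont)
  have cg: "isCont g z" if "0 \<le> z" "z < b" for z
    using that cg0 dg[of z] by (cases "z = 0") (auto intro: DERIV_isCont)
  have ginc: "g x < g y" if "0 \<le> x" "x < y" "y < b" for x y
  proof (rule DERIV_pos_imp_increasing_open[OF that(2)])
    show "\<exists>d. (g has_real_derivative d) (at z) \<and> 0 < d" if "x < z" "z < y" for z
    proof -
      have "0 < z" "z < b" using that \<open>0 \<le> x\<close> \<open>y < b\<close> by linarith+
      then show ?thesis using dg[of z] gp[of z] by blast
    qed
    show "continuous_on {x..y} g"
      by (rule continuous_at_imp_continuous_on) (use cg that in auto)
  qed
  show gpos: "0 < g x" if "0 < x" "x < b" for x
    using ginc[of 0 x] that g0 by simp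
  have mvt: "\<exists>c. x < c \<and> c < y \<and> f y - f x = E c * (g y - g x)" if "0 \<le> x" "x < y" "y < b" for x y
  proof -
    have "\<exists>c. x < c \<and> c < y \<and> (f y - f x) * g' c = (g y - g x) * (E c * g' c)"
    proof (rule GMVT'[of x y f g g' "\<lambda>z. E z * g' z"])
      show "x < y" by fact
      show "isCont f z" if "x \<le> z" "z \<le> y" for z using cf[of z] that \<open>0 \<le> x\<close> \<open>y < b\<close> by linarith
      show "isCont g z" if "x \<le> z" "z \<le> y" for z using cg[of z] that \<open>0 \<le> x\<close> \<open>y < b\<close> by linarith
      show "(g has_real_derivative g' z) (at z)" if "x < z" "z < y" for z using dg[of z] that \<open>0 \<le> x\<close> \<open>y < b\<close> by linarith
      show "(f has_real_derivative E z * g' z) (at z)" if "x < z" "z < y" for z using df[of z] that \<open>0 \<le> x\<close> \<open>y < b\<close> by linarith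
    qed
    then obtain c where c: "x < c" "c < y" "(f y - f x) * g' c = (g y - g x) * (E c * g' c)" by blast
    have "0 < g' c" using gp c that by simp
    moreover have "(f y - f x - E c * (g y - g x)) * g' c = 0" using c(3) by (simp add: algebra_simps)
    ultimately have "f y - f x = E c * (g y - g x)" by simp
    then show ?thesis using c by blast
  qed
  have Elow: "L \<le> E w" if "0 < w" "w < b" for w
  proof (rule tendsto_upperbound[OF Elim])
    show "\<forall>\<^sub>F i in at_right 0. E i \<le> E w"
      unfolding eventually_at_right_field using that Emono by (intro exI[of _ w]) (auto intro: less_imp_le)
  qed simp
  have R: "\<exists>c. 0 < c \<and> c < x \<and> f x / g x = E c" if "0 < x" "x < b" for x
  proof -
    obtain c where c: "0 < c" "c < x" "f x - f 0 = E c * (g x - g 0)" using mvt[of 0 x] \<open>0 < x\<close> \<open>x < b\<close> by auto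
    have "0 < g x" using gpos that by simp
    then have "f x / g x = E c" using c f0 g0 by (simp add: field_simps)
    then show ?thesis using c by blast
  qed
  show "L < f x / g x" if "0 < x" "x < b" for x
  proof -
    obtain c where c: "0 < c" "c < x" "f x / g x = E c" using R[of x] \<open>0 < x\<close> \<open>x < b\<close> by blast
    have "L \<le> E (c/2)" using Elow[of "c/2"] c that by simp
    also have "E (c/2) < E c" using Emono[of "c/2" c] c that by simp
    finally show ?thesis using c by simp
  qed
  show "f x / g x < f y / g y" if "0 < x" "x < y" "y < b" for x y
  proof -
    obtain c' where c': "0 < c'" "c' < x" "f x / g x = E c'" using R[of x] \<open>0 < x\<close> \<open>x < y\<close> \<open>y < b\<close> by auto
    obtain c where c: "x < c" "c < y" "f y - f x = E c * (g y - g x)" using mvt[of x y] \<open>0 < x\<close> \<open>x < y\<close> \<open>y < b\<close> by auto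
    define Rx where "Rx = f x / g x"
    have gx: "0 < g x" "0 < g y" using gpos that by auto
    have fx: "f x = Rx * g x" using gx unfolding Rx_def by simp
    have "Rx < E c" using Emono[of c' x] Emono[of x c] c c' that unfolding Rx_def by simp
    moreover have "0 < g y - g x" using ginc[of x y] that by simp
    ultimately have "Rx * (g y - g x) < E c * (g y - g x)" by (intro mult_strict_right_mono)
    then have "Rx * g y < f y" using c fx by (simp add: algebra_simps)
    then show ?thesis using gx unfolding Rx_def by (simp add: pos_less_divide_eq)
  qed
  show "\<exists>x. 0 < x \<and> x < b \<and> f x / g x < c" if "L < c" for c
  proof -
    have "\<forall>\<^sub>F z in at_right 0. E z < c" using order_tendstoD(2)[OF Elim that] .
    then obtain d where d: "0 < d" "\<And>z. 0 < z \<Longrightarrow> z < d \<Longrightarrow> E z < c"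
      unfolding eventually_at_right_field by auto
    define x where "x = min d b / 2"
    have x: "0 < x" "x < b" "x < d" using d b unfolding x_def by auto
    obtain c' where c': "0 < c'" "c' < x" "f x / g x = E c'" using R x by blast
    then have "f x / g x < c" using d(2)[of c'] x by auto
    then show ?thesis using x by blast
  qed
qed

lemma abs_end:
  fixes R :: "real \<Rightarrow> real"
  assumes mono: "\<And>x y. 0 < x \<Longrightarrow> x < y \<Longrightarrow> y < b \<Longrightarrow> R x < R y"
    and lim: "(R \<longlongrightarrow> M) (at_left b)" and b: "0 < b"
  shows abs_end_up: "\<And>x. 0 < x \<Longrightarrow> x < b \<Longrightarrow> R x < M"
    and abs_end_best: "\<And>c. c < M \<Longrightarrow> \<exists>x. 0 < x \<and> x < b \<and> c < R x"
proof -
  show "R x < M" if "0 < x" "x < b" for x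
  proof -
    define m where "m = (x + b) / 2"
    have m: "x < m" "m < b" using that unfolding m_def by auto
    have "R m \<le> M"
    proof (rule tendsto_lowerbound[OF lim])
      show "\<forall>\<^sub>F i in at_left b. R m \<le> R i"
        unfolding eventually_at_left_field using m that mono
        by (intro exI[of _ m]) (auto intro: less_imp_le)
    qed simp
    then show ?thesis using mono[of x m] m that by simp
  qed
  show "\<exists>x. 0 < x \<and> x < b \<and> c < R x" if "c < M" for c
  proof -
    have "\<forall>\<^sub>F z in at_left b. c < R z" using order_tendstoD(1)[OF lim that] .
    then obtain a where a: "a < b" "\<And>z. a < z \<Longrightarrow> z < b \<Longrightarrow> c < R z"
      unfolding eventually_at_left_field by auto
    define x where "x = (max a 0 + b) / 2"
    have "0 < x" "x < b" "a < x" using a b unfolding x_def by (auto simp: max_def)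
    then show ?thesis using a by blast
  qed
qed

definition T :: "real \<Rightarrow> real" where "T x = (if x = 0 then 1 else sin x / x)"
definition Vf :: "real \<Rightarrow> real \<Rightarrow> real" where "Vf p z = (if p = 0 then - z else (1 - exp (p * z)) / p)"

lemma U_Vf: "0 < t \<Longrightarrow> U p t = Vf p (ln t)"
  by (simp add: U_def Vf_def powr_def mult.commute)

lemma Vf_der: "(Vf p has_real_derivative - exp (p * z)) (at z)"
proof (cases "p = 0")
  case True
  then have "Vf p = (\<lambda>z. - z)" by (auto simp: Vf_def)
  then show ?thesis using True by (auto intro!: derivative_eq_intros)
next
  case False
  then have "Vf p = (\<lambda>z. (1 - exp (p * z)) / p)" by (auto simp: Vf_def)
  then show ?thesis using False by (auto intro!: derivative_eq_intros)
qed

lemma f_der: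
  assumes "0 < x" "x < pi/2"
  shows "((\<lambda>x. U p (T x)) has_real_derivative (- exp (p * ln (sin x / x)) * (cos x / sin x - 1 / x))) (at x)"
proof -
  note b = basic_sc[OF assms]
  have d1: "((\<lambda>x. ln (sin x) - ln x) has_real_derivative (cos x / sin x - 1 / x)) (at x)"
    using b assms by (auto intro!: derivative_eq_intros simp: field_simps)
  have "((\<lambda>x. Vf p (ln (sin x) - ln x)) has_real_derivative (- exp (p * (ln (sin x) - ln x))) * (cos x / sin x - 1 / x)) (at x)"
    by (rule DERIV_chain2[OF Vf_der d1])
  moreover have "ln (sin x) - ln x = ln (sin x / x)" using b assms by (simp add: ln_div)
  ultimately have d2: "((\<lambda>x. Vf p (ln (sin x) - ln x)) has_real_derivative (- exp (p * ln (sin x / x))) * (cos x / sin x - 1 / x)) (at x)"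
    by simp
  show ?thesis
  proof (rule has_field_derivative_transform_within_open[OF d2, of "{0<..<pi/2}"])
    show "open {0<..<pi/2::real}" by simp
    show "x \<in> {0<..<pi/2}" using assms by simp
    fix z :: real assume z: "z \<in> {0<..<pi/2}"
    then have "0 < sin z" "0 < z" using basic_sc[of z] by auto
    then show "Vf p (ln (sin z) - ln z) = U p (T z)"
      by (simp add: T_def U_Vf ln_div)
  qed
qed

lemma g_der:
  assumes "0 < x" "x < pi/2"
  shows "((\<lambda>x. U q (cos x)) has_real_derivative (exp (q * ln (cos x)) * (sin x / cos x))) (at x)"
proof -
  note b = basic_sc[OF assms]
  have d1: "((\<lambda>x. ln (cos x)) has_real_derivative (- sin x / cos x)) (at x)"
    using b assms by (auto intro!: derivative_eq_intros simp: field_simps)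
  have d2: "((\<lambda>x. Vf q (ln (cos x))) has_real_derivative (exp (q * ln (cos x)) * (sin x / cos x))) (at x)"
    using DERIV_chain2[OF Vf_der d1] by simp
  show ?thesis
  proof (rule has_field_derivative_transform_within_open[OF d2, of "{0<..<pi/2}"])
    show "open {0<..<pi/2::real}" by simp
    show "x \<in> {0<..<pi/2}" using assms by simp
    fix z :: real assume z: "z \<in> {0<..<pi/2}"
    then have "0 < cos z" using basic_sc[of z] by auto
    then show "Vf q (ln (cos z)) = U q (cos z)" by (simp add: U_Vf)
  qed
qed

definition psi :: "real \<Rightarrow> real \<Rightarrow> real \<Rightarrow> real" where
  "psi p q x = (p - 1) * (ln (sin x) - ln x) + ln (sin x - x * cos x) - 2 * ln x - ln (sin x) - (q - 1) * ln (cos x)"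

definition Ef :: "real \<Rightarrow> real \<Rightarrow> real \<Rightarrow> real" where
  "Ef p q x = exp (psi p q x)"

lemma psi_der:
  assumes "0 < x" "x < pi/2"
  shows "(psi p q has_real_derivative Fh p q x) (at x)"
proof -
  note b = basic_sc[OF assms]
  have d: "0 < sin x - x * cos x" using b by simp
  have "((\<lambda>x. (p - 1) * (ln (sin x) - ln x) + ln (sin x - x * cos x) - 2 * ln x - ln (sin x) - (q - 1) * ln (cos x))
     has_real_derivative ((p - 1) * (cos x / sin x - 1 / x) + (cos x - (cos x - x * sin x)) / (sin x - x * cos x) - 2 / x - cos x / sin x - (q - 1) * (- sin x / cos x))) (at x)"
    using b d assms by (auto intro!: derivative_eq_intros simp: field_simps)
  moreover have "(p - 1) * (cos x / sin x - 1 / x) + (cos x - (cos x - x * sin x)) / (sin x - x * cos x) - 2 / x - cos x / sin x - (q - 1) * (- sin x / cos x) = Fh p q x"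
    unfolding Fh_def by (simp add: algebra_simps)
  ultimately show ?thesis unfolding psi_def[abs_def] by simp
qed

lemma Ef_der:
  assumes "0 < x" "x < pi/2"
  shows "(Ef p q has_real_derivative Ef p q x * Fh p q x) (at x)"
  unfolding Ef_def[abs_def] using DERIV_chain2[OF DERIV_exp psi_der[OF assms]] by simp

lemma Ef_inc:
  assumes F: "\<And>x. 0 < x \<Longrightarrow> x < pi/2 \<Longrightarrow> 0 < Fh p q x" and zw: "0 < z" "z < w" "w < pi/2"
  shows "Ef p q z < Ef p q w"
proof (rule DERIV_pos_imp_increasing[OF zw(2)])
  fix x assume "z \<le> x" "x \<le> w"
  then have x: "0 < x" "x < pi/2" using zw by auto
  show "\<exists>y. (Ef p q has_real_derivative y) (at x) \<and> 0 < y"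
  proof -
    have "0 < Ef p q x * Fh p q x" using F[OF x] by (simp add: Ef_def)
    then show ?thesis using Ef_der[OF x, of p q] by blast
  qed
qed

lemma Ef_dec:
  assumes F: "\<And>x. 0 < x \<Longrightarrow> x < pi/2 \<Longrightarrow> Fh p q x < 0" and zw: "0 < z" "z < w" "w < pi/2"
  shows "Ef p q w < Ef p q z"
proof (rule DERIV_neg_imp_decreasing[OF zw(2)])
  fix x assume "z \<le> x" "x \<le> w"
  then have x: "0 < x" "x < pi/2" using zw by auto
  show "\<exists>y. (Ef p q has_real_derivative y) (at x) \<and> y < 0"
  proof -
    have "Ef p q x * Fh p q x < 0" using F[OF x] by (simp add: Ef_def mult_pos_neg)
    then show ?thesis using Ef_der[OF x, of p q] by blast
  qed
qed

lemma f'_eq: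
  assumes "0 < x" "x < pi/2"
  shows "- exp (p * ln (sin x / x)) * (cos x / sin x - 1 / x) = Ef p q x * (exp (q * ln (cos x)) * (sin x / cos x))"
proof -
  note b = basic_sc[OF assms]
  have d: "0 < sin x - x * cos x" using b by simp
  have arg: "psi p q x + q * ln (cos x) = p * ln (sin x / x) + ln (sin x - x * cos x) + ln (cos x) - (ln (sin x) + ln (sin x) + ln x)"
    unfolding psi_def using b assms by (simp add: ln_div algebra_simps)
  have "Ef p q x * exp (q * ln (cos x)) = exp (psi p q x + q * ln (cos x))"
    unfolding Ef_def by (simp add: exp_add)
  also have "\<dots> = exp (p * ln (sin x / x)) * exp (ln (sin x - x * cos x)) * exp (ln (cos x)) / (exp (ln (sin x)) * exp (ln (sin x)) * exp (ln x))"
    unfolding arg by (simp only: exp_add exp_diff)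
  also have "\<dots> = exp (p * ln (sin x / x)) * (sin x - x * cos x) * cos x / (sin x * sin x * x)"
    using b assms d by simp
  finally show ?thesis using b assms d by (simp add: field_simps)
qed

lemma Ef_lim: "(Ef p q \<longlongrightarrow> 1/3) (at_right 0)"
proof -
  have ev: "\<forall>\<^sub>F x in at_right 0. exp ((p - 1) * ln (sin x / x)) * ((sin x - x * cos x) / (x^2 * sin x)) * exp ((1 - q) * ln (cos x)) = Ef p q x"
  proof -
    have "\<forall>\<^sub>F x in at_right (0::real). 0 < x \<and> x < pi/2"
      unfolding eventually_at_right_field by (intro exI[of _ "pi/2"]) auto
    then show ?thesis
    proof eventually_elim
      case (elim x)
      then have elim: "0 < x" "x < pi/2" by auto
      note b = basic_sc[OF elim]
      have d: "0 < sin x - x * cos x" using b by simp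
      have "Ef p q x = exp ((p - 1) * ln (sin x / x) + ln (sin x - x * cos x) - ln (x^2 * sin x) + (1 - q) * ln (cos x))"
        unfolding Ef_def psi_def using b elim by (simp add: ln_div ln_mult algebra_simps power2_eq_square)
      also have "\<dots> = exp ((p - 1) * ln (sin x / x)) * ((sin x - x * cos x) / (x^2 * sin x)) * exp ((1 - q) * ln (cos x))"
        using b elim d by (simp add: exp_add exp_diff)
      finally show ?case by simp
    qed
  qed
  have l1: "((\<lambda>x::real. sin x / x) \<longlongrightarrow> 1) (at_right 0)" by real_asymp
  have l2: "((\<lambda>x::real. (sin x - x * cos x) / (x^2 * sin x)) \<longlongrightarrow> 1/3) (at_right 0)" by real_asymp
  have l3: "((\<lambda>x::real. cos x) \<longlongrightarrow> 1) (at_right 0)" by real_asymp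
  have "((\<lambda>x. exp ((p - 1) * ln (sin x / x)) * ((sin x - x * cos x) / (x^2 * sin x)) * exp ((1 - q) * ln (cos x)))
      \<longlongrightarrow> exp ((p - 1) * ln 1) * (1/3) * exp ((1 - q) * ln 1)) (at_right 0)"
    by (intro tendsto_intros l1 l2 l3) auto
  then have "((\<lambda>x. exp ((p - 1) * ln (sin x / x)) * ((sin x - x * cos x) / (x^2 * sin x)) * exp ((1 - q) * ln (cos x)))
      \<longlongrightarrow> 1/3) (at_right 0)" by simp
  then show ?thesis using tendsto_cong[OF ev] by simp
qed

lemma U_one: "U p 1 = 0" by (simp add: U_def)

lemma U_isCont: assumes "0 < t" shows "isCont (U p) t"
proof (cases "p = 0")
  case True
  then have e: "U p = (\<lambda>t. - ln t)" by (auto simp: U_def)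
  have "isCont (\<lambda>t. - ln t) t" by (intro continuous_intros) (use assms in auto)
  then show ?thesis unfolding e .
next
  case False
  then have e: "U p = (\<lambda>t. (1 - t powr p) / p)" by (auto simp: U_def)
  have "isCont (\<lambda>t. (1 - t powr p) / p) t" by (intro continuous_intros) (use assms False in auto)
  then show ?thesis unfolding e .
qed

lemma T_isCont0: "isCont T 0"
proof -
  have l: "((\<lambda>x::real. sin x / x) \<longlongrightarrow> 1) (at 0)" by real_asymp
  have ev: "\<forall>\<^sub>F x in at 0. sin x / x = T x" by (simp add: eventually_at_filter T_def)
  have "(T \<longlongrightarrow> 1) (at 0)" by (rule tendsto_cong[THEN iffD1, OF ev l])
  then show ?thesis unfolding isCont_def by (simp add: T_def)
qed

lemma fU_cont0: "isCont (\<lambda>x. U p (T x)) 0"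
  by (rule isCont_o2[OF T_isCont0]) (simp add: T_def U_isCont)

lemma gU_cont0: "isCont (\<lambda>x. U q (cos x)) 0"
  by (rule isCont_o2[where f = cos and g = "U q"]) (simp_all add: U_isCont)

lemma kappa_U: "0 < q \<Longrightarrow> kappa p q = U p (2 / pi) / (1 / q)"
  by (simp add: kappa_def U_def ln_div)

lemma lim_R:
  assumes q: "0 < q"
  shows "((\<lambda>x. U p (T x) / U q (cos x)) \<longlongrightarrow> kappa p q) (at_left (pi/2))"
proof -
  have ev: "\<forall>\<^sub>F x in at_left (pi/2). 0 < x \<and> x < pi/2"
    unfolding eventually_at_left_field by (intro exI[of _ 0]) auto
  have l1: "((\<lambda>x. sin x / x) \<longlongrightarrow> 2 / pi) (at_left (pi/2))"
  proof -
    have "((\<lambda>x. sin x / x) \<longlongrightarrow> sin (pi/2) / (pi/2)) (at_left (pi/2))"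
      by (intro tendsto_intros) auto
    then show ?thesis by simp
  qed
  have l2: "((\<lambda>x. U p (sin x / x)) \<longlongrightarrow> U p (2 / pi)) (at_left (pi/2))"
    by (rule isCont_tendsto_compose[OF U_isCont l1]) simp
  have e2: "\<forall>\<^sub>F x in at_left (pi/2). U p (sin x / x) = U p (T x)"
    using ev by eventually_elim (simp add: T_def)
  have l3: "((\<lambda>x. U p (T x)) \<longlongrightarrow> U p (2 / pi)) (at_left (pi/2))"
    by (rule tendsto_cong[THEN iffD1, OF e2 l2])
  have c0: "((\<lambda>x. cos x) \<longlongrightarrow> 0) (at_left (pi/2))"
  proof -
    have "((\<lambda>x. cos x) \<longlongrightarrow> cos (pi/2)) (at_left (pi/2))" by (intro tendsto_intros)
    then show ?thesis by simp
  qed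
  have cpos: "\<forall>\<^sub>F x in at_left (pi/2). 0 \<le> cos x"
    using ev
  proof eventually_elim
    case (elim x)
    then show ?case using basic_sc(2)[of x] by auto
  qed
  have l4: "((\<lambda>x. cos x powr q) \<longlongrightarrow> 0) (at_left (pi/2))"
    by (rule tendsto_zero_powrI[OF c0 tendsto_const cpos q])
  have l5: "((\<lambda>x. U q (cos x)) \<longlongrightarrow> 1 / q) (at_left (pi/2))"
  proof -
    have "((\<lambda>x. (1 - cos x powr q) / q) \<longlongrightarrow> (1 - 0) / q) (at_left (pi/2))"
      by (intro tendsto_divide tendsto_diff tendsto_const l4) (use q in simp)
    then show ?thesis using q by (simp add: U_def)
  qed
  have "((\<lambda>x. U p (T x) / U q (cos x)) \<longlongrightarrow> U p (2 / pi) / (1 / q)) (at_left (pi/2))"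
    by (rule tendsto_divide[OF l3 l5]) (use q in simp)
  then show ?thesis unfolding kappa_U[OF q] .
qed

lemma fg_data:
  assumes "0 < z" "z < pi/2"
  shows "((\<lambda>x. U p (T x)) has_real_derivative Ef p q z * (exp (q * ln (cos z)) * (sin z / cos z))) (at z)"
    and "((\<lambda>x. U q (cos x)) has_real_derivative (exp (q * ln (cos z)) * (sin z / cos z))) (at z)"
    and "0 < exp (q * ln (cos z)) * (sin z / cos z)"
  using f_der[OF assms, of p] f'_eq[OF assms, of p q] g_der[OF assms, of q] basic_sc[OF assms] by auto

lemma T_pos: "0 < x \<Longrightarrow> T x = sin x / x" by (simp add: T_def)

lemma part_inc:
  assumes F: "\<And>x. 0 < x \<Longrightarrow> x < pi/2 \<Longrightarrow> 0 < Fh p q x"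
  shows part_inc_a: "\<forall>x\<in>{0<..<pi/2}. U q (cos x) / 3 < U p (sin x / x)"
    and part_inc_b: "0 < q \<Longrightarrow> \<forall>x\<in>{0<..<pi/2}. U p (sin x / x) < kappa p q * U q (cos x)"
    and part_inc_c: "\<forall>c > 1/3. \<not> (\<forall>x\<in>{0<..<pi/2}. c * U q (cos x) \<le> U p (sin x / x))"
    and part_inc_d: "0 < q \<Longrightarrow> \<forall>c < kappa p q. \<not> (\<forall>x\<in>{0<..<pi/2}. U p (sin x / x) \<le> c * U q (cos x))"
proof -
  let ?f = "\<lambda>x. U p (T x)" and ?g = "\<lambda>x. U q (cos x)" and ?g' = "\<lambda>z. exp (q * ln (cos z)) * (sin z / cos z)"
  have b: "0 < pi/2" by simp
  have f0: "?f 0 = 0" by (simp add: T_def U_one)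
  have g0: "?g 0 = 0" by (simp add: U_one)
  have df: "\<And>z. 0 < z \<Longrightarrow> z < pi/2 \<Longrightarrow> (?f has_real_derivative Ef p q z * ?g' z) (at z)"
    by (rule fg_data(1))
  have dg: "\<And>z. 0 < z \<Longrightarrow> z < pi/2 \<Longrightarrow> (?g has_real_derivative ?g' z) (at z)"
    by (rule fg_data(2))
  have gp: "\<And>z. 0 < z \<Longrightarrow> z < pi/2 \<Longrightarrow> 0 < ?g' z"
    by (rule fg_data(3))
  have Em: "\<And>z w. 0 < z \<Longrightarrow> z < w \<Longrightarrow> w < pi/2 \<Longrightarrow> Ef p q z < Ef p q w"
    by (rule Ef_inc[OF F])
  note prem = b f0 g0 fU_cont0 gU_cont0 df dg gp Em Ef_lim
  have A1: "\<And>x. 0 < x \<Longrightarrow> x < pi/2 \<Longrightarrow> 0 < ?g x"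
    by (rule abs_inc_gpos[where f = ?f and g = ?g and E = "Ef p q" and g' = ?g' and b = "pi/2" and L = "1/3"]) (assumption | rule prem)+
  have A2: "\<And>x. 0 < x \<Longrightarrow> x < pi/2 \<Longrightarrow> 1/3 < ?f x / ?g x"
    by (rule abs_inc_low[where f = ?f and g = ?g and E = "Ef p q" and g' = ?g' and b = "pi/2" and L = "1/3"]) (assumption | rule prem)+
  have A3: "\<And>x y. 0 < x \<Longrightarrow> x < y \<Longrightarrow> y < pi/2 \<Longrightarrow> ?f x / ?g x < ?f y / ?g y"
    by (rule abs_inc_mono[where f = ?f and g = ?g and E = "Ef p q" and g' = ?g' and b = "pi/2" and L = "1/3"]) (assumption | rule prem)+
  have A4: "\<And>c. 1/3 < c \<Longrightarrow> \<exists>x. 0 < x \<and> x < pi/2 \<and> ?f x / ?g x < c"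
    by (rule abs_inc_best[where f = ?f and g = ?g and E = "Ef p q" and g' = ?g' and b = "pi/2" and L = "1/3"]) (assumption | rule prem)+
  have gpos: "0 < U q (cos x)" if "0 < x" "x < pi/2" for x
    using A1[OF that] by (simp add: T_def U_one)
  have low: "1/3 < U p (sin x / x) / U q (cos x)" if "0 < x" "x < pi/2" for x
    using A2[OF that] that by (simp add: T_def U_one)
  show "\<forall>x\<in>{0<..<pi/2}. U q (cos x) / 3 < U p (sin x / x)"
  proof
    fix x assume x: "x \<in> {0<..<pi/2::real}"
    then have "0 < U q (cos x)" "1/3 < U p (sin x / x) / U q (cos x)" using gpos low by auto
    then show "U q (cos x) / 3 < U p (sin x / x)" by (simp add: field_simps)
  qed
  have mono: "\<And>x y. 0 < x \<Longrightarrow> x < y \<Longrightarrow> y < pi/2 \<Longrightarrow> ?f x / ?g x < ?f y / ?g y"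
    by (rule A3)
  show "\<forall>c > 1/3. \<not> (\<forall>x\<in>{0<..<pi/2}. c * U q (cos x) \<le> U p (sin x / x))"
  proof (intro allI impI notI)
    fix c :: real assume c: "1/3 < c" and H: "\<forall>x\<in>{0<..<pi/2}. c * U q (cos x) \<le> U p (sin x / x)"
    obtain x where x: "0 < x" "x < pi/2" "?f x / ?g x < c" using A4[OF c] by blast
    have "U p (sin x / x) / U q (cos x) < c" using x by (simp add: T_def)
    then have "U p (sin x / x) < c * U q (cos x)" using gpos[OF x(1,2)] by (simp add: field_simps)
    moreover have "c * U q (cos x) \<le> U p (sin x / x)" using H x(1,2) by simp
    ultimately show False by linarith
  qed
  assume q: "0 < q"
  have B1: "\<And>x. 0 < x \<Longrightarrow> x < pi/2 \<Longrightarrow> ?f x / ?g x < kappa p q"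
    by (rule abs_end_up[where b = "pi/2" and R = "\<lambda>x. ?f x / ?g x" and M = "kappa p q"]) (assumption | rule mono lim_R[OF q] b)+
  have B2: "\<And>c. c < kappa p q \<Longrightarrow> \<exists>x. 0 < x \<and> x < pi/2 \<and> c < ?f x / ?g x"
    by (rule abs_end_best[where b = "pi/2" and R = "\<lambda>x. ?f x / ?g x" and M = "kappa p q"]) (assumption | rule mono lim_R[OF q] b)+
  show "\<forall>x\<in>{0<..<pi/2}. U p (sin x / x) < kappa p q * U q (cos x)"
  proof
    fix x assume x: "x \<in> {0<..<pi/2::real}"
    then have "U p (sin x / x) / U q (cos x) < kappa p q" using B1[of x] by (simp add: T_def)
    then show "U p (sin x / x) < kappa p q * U q (cos x)" using gpos x by (simp add: field_simps)
  qed
  show "\<forall>c < kappa p q. \<not> (\<forall>x\<in>{0<..<pi/2}. U p (sin x / x) \<le> c * U q (cos x))"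
  proof (intro allI impI notI)
    fix c :: real assume c: "c < kappa p q" and H: "\<forall>x\<in>{0<..<pi/2}. U p (sin x / x) \<le> c * U q (cos x)"
    obtain x where x: "0 < x" "x < pi/2" "c < ?f x / ?g x" using B2[OF c] by blast
    have "c < U p (sin x / x) / U q (cos x)" using x by (simp add: T_def)
    then have "c * U q (cos x) < U p (sin x / x)" using gpos[OF x(1,2)] by (simp add: field_simps)
    moreover have "U p (sin x / x) \<le> c * U q (cos x)" using H x(1,2) by simp
    ultimately show False by linarith
  qed
qed

lemma part_dec:
  assumes F: "\<And>x. 0 < x \<Longrightarrow> x < pi/2 \<Longrightarrow> Fh p q x < 0"
  shows part_dec_a: "\<forall>x\<in>{0<..<pi/2}. U p (sin x / x) < U q (cos x) / 3"
    and part_dec_b: "0 < q \<Longrightarrow> \<forall>x\<in>{0<..<pi/2}. kappa p q * U q (cos x) < U p (sin x / x)"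
    and part_dec_c: "\<forall>c < 1/3. \<not> (\<forall>x\<in>{0<..<pi/2}. U p (sin x / x) \<le> c * U q (cos x))"
proof -
  let ?f = "\<lambda>x. - U p (T x)" and ?g = "\<lambda>x. U q (cos x)" and ?g' = "\<lambda>z. exp (q * ln (cos z)) * (sin z / cos z)"
    and ?E = "\<lambda>x. - Ef p q x"
  have b: "0 < pi/2" by simp
  have f0: "?f 0 = 0" by (simp add: T_def U_one)
  have g0: "?g 0 = 0" by (simp add: U_one)
  have cf0: "isCont ?f 0" by (rule isCont_minus[OF fU_cont0])
  have df: "\<And>z. 0 < z \<Longrightarrow> z < pi/2 \<Longrightarrow> (?f has_real_derivative ?E z * ?g' z) (at z)"
  proof -
    fix z :: real assume z: "0 < z" "z < pi/2"
    have "(?f has_real_derivative - (Ef p q z * ?g' z)) (at z)"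
      by (rule DERIV_minus[OF fg_data(1)[OF z]])
    then show "(?f has_real_derivative ?E z * ?g' z) (at z)" by simp
  qed
  have dg: "\<And>z. 0 < z \<Longrightarrow> z < pi/2 \<Longrightarrow> (?g has_real_derivative ?g' z) (at z)"
    by (rule fg_data(2))
  have gp: "\<And>z. 0 < z \<Longrightarrow> z < pi/2 \<Longrightarrow> 0 < ?g' z"
    by (rule fg_data(3))
  have Em: "\<And>z w. 0 < z \<Longrightarrow> z < w \<Longrightarrow> w < pi/2 \<Longrightarrow> ?E z < ?E w"
    using Ef_dec[OF F] by simp
  have El: "(?E \<longlongrightarrow> - (1/3)) (at_right 0)"
    by (rule tendsto_minus[OF Ef_lim])
  note prem = b f0 g0 cf0 gU_cont0 df dg gp Em El
  have A1: "\<And>x. 0 < x \<Longrightarrow> x < pi/2 \<Longrightarrow> 0 < ?g x"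
    by (rule abs_inc_gpos[where f = ?f and g = ?g and E = ?E and g' = ?g' and b = "pi/2" and L = "- (1/3)"]) (assumption | rule prem)+
  have A2: "\<And>x. 0 < x \<Longrightarrow> x < pi/2 \<Longrightarrow> - (1/3) < ?f x / ?g x"
    by (rule abs_inc_low[where f = ?f and g = ?g and E = ?E and g' = ?g' and b = "pi/2" and L = "- (1/3)"]) (assumption | rule prem)+
  have A3: "\<And>x y. 0 < x \<Longrightarrow> x < y \<Longrightarrow> y < pi/2 \<Longrightarrow> ?f x / ?g x < ?f y / ?g y"
    by (rule abs_inc_mono[where f = ?f and g = ?g and E = ?E and g' = ?g' and b = "pi/2" and L = "- (1/3)"]) (assumption | rule prem)+
  have A4: "\<And>c. - (1/3) < c \<Longrightarrow> \<exists>x. 0 < x \<and> x < pi/2 \<and> ?f x / ?g x < c"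
    by (rule abs_inc_best[where f = ?f and g = ?g and E = ?E and g' = ?g' and b = "pi/2" and L = "- (1/3)"]) (assumption | rule prem)+
  have gpos: "0 < U q (cos x)" if "0 < x" "x < pi/2" for x
    using A1[OF that] by simp
  show "\<forall>x\<in>{0<..<pi/2}. U p (sin x / x) < U q (cos x) / 3"
  proof
    fix x assume x: "x \<in> {0<..<pi/2::real}"
    then have "0 < U q (cos x)" "- (1/3) < - U p (sin x / x) / U q (cos x)" using gpos A2[of x] by (auto simp: T_def)
    then show "U p (sin x / x) < U q (cos x) / 3" by (simp add: field_simps)
  qed
  show "\<forall>c < 1/3. \<not> (\<forall>x\<in>{0<..<pi/2}. U p (sin x / x) \<le> c * U q (cos x))"
  proof (intro allI impI notI)
    fix c :: real assume c: "c < 1/3" and H: "\<forall>x\<in>{0<..<pi/2}. U p (sin x / x) \<le> c * U q (cos x)"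
    have "- (1/3) < - c" using c by simp
    then obtain x where x: "0 < x" "x < pi/2" "?f x / ?g x < - c" using A4 by blast
    have "- U p (sin x / x) / U q (cos x) < - c" using x by (simp add: T_def)
    then have "c * U q (cos x) < U p (sin x / x)" using gpos[OF x(1,2)] by (simp add: field_simps)
    moreover have "U p (sin x / x) \<le> c * U q (cos x)" using H x(1,2) by simp
    ultimately show False by linarith
  qed
  assume q: "0 < q"
  have lim: "((\<lambda>x. ?f x / ?g x) \<longlongrightarrow> - kappa p q) (at_left (pi/2))"
    using tendsto_minus[OF lim_R[OF q, of p]] by simp
  have B1: "\<And>x. 0 < x \<Longrightarrow> x < pi/2 \<Longrightarrow> ?f x / ?g x < - kappa p q"
    by (rule abs_end_up[where b = "pi/2" and R = "\<lambda>x. ?f x / ?g x" and M = "- kappa p q"]) (assumption | rule A3 lim b)+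
  show "\<forall>x\<in>{0<..<pi/2}. kappa p q * U q (cos x) < U p (sin x / x)"
  proof
    fix x assume x: "x \<in> {0<..<pi/2::real}"
    then have "- U p (sin x / x) / U q (cos x) < - kappa p q" using B1[of x] by (simp add: T_def)
    then show "kappa p q * U q (cos x) < U p (sin x / x)" using gpos x by (simp add: field_simps)
  qed
qed

lemma Fh_lin:
  fixes x :: real
  defines "A \<equiv> 1 / x" and "B \<equiv> cos x / sin x" and "C \<equiv> sin x / cos x" and "X \<equiv> x * sin x / (sin x - x * cos x)"
  shows "Fh p q x = (p - 1) * (B - A) + X - 2 * A - B + (q - 1) * C"
  unfolding Fh_def A_def B_def C_def X_def by simp

lemma F_i:
  assumes "1 \<le> q" "p \<le> 3 * q - 8 / 5" "0 < x" "x < pi/2"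
  shows "0 < Fh p q x"
proof -
  define A B C X where "A = 1 / x" and "B = cos x / sin x" and "C = sin x / cos x" and "X = x * sin x / (sin x - x * cos x)"
  have L: "\<And>p q. Fh p q x = (p - 1) * (B - A) + X - 2 * A - B + (q - 1) * C"
    unfolding A_def B_def C_def X_def by (rule Fh_lin)
  have k: "0 < A - B" using kpos assms unfolding A_def B_def by simp
  have h: "0 < C - 3 * (A - B)" using hpos assms unfolding A_def B_def C_def by simp
  have eq: "Fh p q x = Fh (7/5) 1 x + (3 * q - 8/5 - p) * (A - B) + (q - 1) * (C - 3 * (A - B))"
    unfolding L by (simp only: ring_distribs)
  have "0 \<le> (3 * q - 8/5 - p) * (A - B)" using k assms by simp
  moreover have "0 \<le> (q - 1) * (C - 3 * (A - B))" using h assms by simp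
  ultimately show ?thesis using eq FB[OF assms(3,4)] by linarith
qed

lemma F_ii:
  assumes "q \<le> 1" "pi^2/4 - 1 \<le> p" "0 < x" "x < pi/2"
  shows "Fh p q x < 0"
proof -
  define A B C X where "A = 1 / x" and "B = cos x / sin x" and "C = sin x / cos x" and "X = x * sin x / (sin x - x * cos x)"
  have L: "\<And>p q. Fh p q x = (p - 1) * (B - A) + X - 2 * A - B + (q - 1) * C"
    unfolding A_def B_def C_def X_def by (rule Fh_lin)
  have k: "0 < A - B" using kpos assms unfolding A_def B_def by simp
  have t: "0 < C" using basic_sc[OF assms(3,4)] unfolding C_def by simp
  have eq: "Fh p q x = Fh (pi^2/4 - 1) 1 x - (p - (pi^2/4 - 1)) * (A - B) + (q - 1) * C"
    unfolding L by (simp only: ring_distribs)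
  have "0 \<le> (p - (pi^2/4 - 1)) * (A - B)" using k assms by simp
  moreover have "(q - 1) * C \<le> 0" using t assms by (simp add: mult_nonpos_nonneg)
  ultimately show ?thesis using eq FD[OF assms(3,4)] by linarith
qed

lemma F_iii:
  assumes "q \<le> 34/35" "3 * q - 8 / 5 \<le> p" "0 < x" "x < pi/2"
  shows "Fh p q x < 0"
proof -
  define A B C X where "A = 1 / x" and "B = cos x / sin x" and "C = sin x / cos x" and "X = x * sin x / (sin x - x * cos x)"
  have L: "\<And>p q. Fh p q x = (p - 1) * (B - A) + X - 2 * A - B + (q - 1) * C"
    unfolding A_def B_def C_def X_def by (rule Fh_lin)
  have k: "0 < A - B" using kpos assms unfolding A_def B_def by simp
  have h: "0 < C - 3 * (A - B)" using hpos assms unfolding A_def B_def C_def by simp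
  have eq: "Fh p q x = Fh (46/35) (34/35) x - (p - 3 * q + 8/5) * (A - B) + (q - 34/35) * (C - 3 * (A - B))"
    unfolding L by (simp only: ring_distribs)
  have "0 \<le> (p - 3 * q + 8/5) * (A - B)" using k assms by simp
  moreover have "(q - 34/35) * (C - 3 * (A - B)) \<le> 0" using h assms by (simp add: mult_nonpos_nonneg)
  ultimately show ?thesis using eq FC[OF assms(3,4)] by linarith
qed

theorem theorem1:
  fixes p q :: real
  shows
  "(1 \<le> q \<and> p \<le> 3 * q - 8 / 5 \<longrightarrow>
      (\<forall>x\<in>{0<..<pi/2}. U q (cos x) / 3 < U p (sin x / x) \<and>
                          U p (sin x / x) < kappa p q * U q (cos x)) \<and>
      (\<forall>c > 1/3. \<not> (\<forall>x\<in>{0<..<pi/2}. c * U q (cos x) \<le> U p (sin x / x))) \<and>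
      (\<forall>c < kappa p q. \<not> (\<forall>x\<in>{0<..<pi/2}. U p (sin x / x) \<le> c * U q (cos x))))
   \<and> (34 / 35 < q \<and> q \<le> 1 \<and> pi ^ 2 / 4 - 1 \<le> p \<longrightarrow>
      (\<forall>x\<in>{0<..<pi/2}. kappa p q * U q (cos x) < U p (sin x / x) \<and>
                          U p (sin x / x) < U q (cos x) / 3))
   \<and> (0 < q \<and> q \<le> 34 / 35 \<and> 3 * q - 8 / 5 \<le> p \<longrightarrow>
      (\<forall>x\<in>{0<..<pi/2}. kappa p q * U q (cos x) < U p (sin x / x) \<and>
                          U p (sin x / x) < U q (cos x) / 3))
   \<and> (q \<le> 0 \<and> 3 * q - 8 / 5 \<le> p \<longrightarrow>
      (\<forall>x\<in>{0<..<pi/2}. U p (sin x / x) < U q (cos x) / 3) \<and>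
      (\<forall>c < 1/3. \<not> (\<forall>x\<in>{0<..<pi/2}. U p (sin x / x) \<le> c * U q (cos x))))"
proof (intro conjI impI)
  assume H: "1 \<le> q \<and> p \<le> 3 * q - 8 / 5"
  have F: "\<forall>x. 0 < x \<and> x < pi/2 \<longrightarrow> 0 < Fh p q x" using F_i[of q p] H by auto
  have q: "0 < q" using H by simp
  have a: "\<forall>x\<in>{0<..<pi/2}. U q (cos x) / 3 < U p (sin x / x)" by (rule part_inc_a) (use F in auto)
  have b: "\<forall>x\<in>{0<..<pi/2}. U p (sin x / x) < kappa p q * U q (cos x)" by (rule part_inc_b) (use F q in auto)
  show "\<forall>x\<in>{0<..<pi/2}. U q (cos x) / 3 < U p (sin x / x) \<and> U p (sin x / x) < kappa p q * U q (cos x)"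
    using a b by blast
  show "\<forall>c > 1/3. \<not> (\<forall>x\<in>{0<..<pi/2}. c * U q (cos x) \<le> U p (sin x / x))" by (rule part_inc_c) (use F in auto)
  show "\<forall>c < kappa p q. \<not> (\<forall>x\<in>{0<..<pi/2}. U p (sin x / x) \<le> c * U q (cos x))" by (rule part_inc_d) (use F q in auto)
next
  assume H: "34 / 35 < q \<and> q \<le> 1 \<and> pi ^ 2 / 4 - 1 \<le> p"
  have F: "\<forall>x. 0 < x \<and> x < pi/2 \<longrightarrow> Fh p q x < 0" using F_ii[of q p] H by auto
  have q: "0 < q" using H by simp
  have a: "\<forall>x\<in>{0<..<pi/2}. U p (sin x / x) < U q (cos x) / 3" by (rule part_dec_a) (use F in auto)
  have b: "\<forall>x\<in>{0<..<pi/2}. kappa p q * U q (cos x) < U p (sin x / x)" by (rule part_dec_b) (use F q in auto)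
  show "\<forall>x\<in>{0<..<pi/2}. kappa p q * U q (cos x) < U p (sin x / x) \<and> U p (sin x / x) < U q (cos x) / 3"
    using a b by blast
next
  assume H: "0 < q \<and> q \<le> 34 / 35 \<and> 3 * q - 8 / 5 \<le> p"
  have F: "\<forall>x. 0 < x \<and> x < pi/2 \<longrightarrow> Fh p q x < 0" using F_iii[of q p] H by auto
  have q: "0 < q" using H by simp
  have a: "\<forall>x\<in>{0<..<pi/2}. U p (sin x / x) < U q (cos x) / 3" by (rule part_dec_a) (use F in auto)
  have b: "\<forall>x\<in>{0<..<pi/2}. kappa p q * U q (cos x) < U p (sin x / x)" by (rule part_dec_b) (use F q in auto)
  show "\<forall>x\<in>{0<..<pi/2}. kappa p q * U q (cos x) < U p (sin x / x) \<and> U p (sin x / x) < U q (cos x) / 3"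
    using a b by blast
next
  assume H: "q \<le> 0 \<and> 3 * q - 8 / 5 \<le> p"
  have F: "\<forall>x. 0 < x \<and> x < pi/2 \<longrightarrow> Fh p q x < 0" using F_iii[of q p] H by auto
  show "\<forall>x\<in>{0<..<pi/2}. U p (sin x / x) < U q (cos x) / 3" by (rule part_dec_a) (use F in auto)
  show "\<forall>c < 1/3. \<not> (\<forall>x\<in>{0<..<pi/2}. U p (sin x / x) \<le> c * U q (cos x))" by (rule part_dec_c) (use F in auto)
qed

end
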